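(* Let $G$ be a finite connected simple graph with $n$ vertices and $m\ge n$ edges, $a,b\in\mathbb{C}$, $c=a-b$, $\mathbf d:\ell^2(R(G))\to\ell^2(V(G))$ linear with $\mathbf d\mathbf d^*=\mathbf I_n$, $\mathbf C=a\,\mathbf d^*\mathbf d+b(\mathbf I_{2m}-\mathbf d^*\mathbf d)$ and $\mathbf U=\mathbf S\mathbf C$. Then the eigenvalues of $\mathbf U$ (with algebraic multiplicity) are: (1) $2n$ eigenvalues $\lambda=\frac{c\mu\pm\sqrt{c^2\mu^2+4ab}}{2}$, one pair for each eigenvalue $\mu$ (counted with multiplicity) of the $n\times n$ matrix $\mathbf d\mathbf S\mathbf d^*$; (2) the remaining $2(m-n)$ eigenvalues are $b$ and $-b$, each with multiplicity $m-n$.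
   Context: For a simple graph $G$, $R(G)=\{(u,v),(v,u): uv\in E(G)\}$ is the set of arcs (so $|R(G)|=2m$); for $e=(u,v)$, $e^{-1}=(v,u)$. $\ell^2(V(G))\cong\mathbb{C}^n$ and $\ell^2(R(G))\cong\mathbb{C}^{2m}$ with standard inner products; $\mathbf d^*$ is the adjoint of $\mathbf d$. $\mathbf S$ is the arc-reversal operator on $\ell^2(R(G))$: $(\mathbf S\omega)(e)=\omega(e^{-1})$. $\mathbf I_k$ is the identity of size $k$. *)

theory Defs
  imports "Jordan_Normal_Form.Schur_Decomposition" "Jordan_Normal_Form.Char_Poly"
begin

definition simple_graph :: "nat \<Rightarrow> (nat \<Rightarrow> nat \<Rightarrow> bool) \<Rightarrow> bool" where
  "simple_graph n E \<longleftrightarrow> (\<forall>u v. E u v \<longrightarrow> u < n \<and> v < n \<and> u \<noteq> v \<and> E v u)"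

definition graph_connected :: "nat \<Rightarrow> (nat \<Rightarrow> nat \<Rightarrow> bool) \<Rightarrow> bool" where
  "graph_connected n E \<longleftrightarrow> (\<forall>u<n. \<forall>v<n. E\<^sup>*\<^sup>* u v)"

definition num_edges :: "(nat \<Rightarrow> nat \<Rightarrow> bool) \<Rightarrow> nat" where
  "num_edges E = card {{u, v} | u v. E u v}"

text \<open>An enumeration of the arc set R(G), identifying l2(R(G)) with C^(2m).\<close>
definition arc_enum :: "nat \<Rightarrow> (nat \<Rightarrow> nat \<Rightarrow> bool) \<Rightarrow> (nat \<times> nat) list \<Rightarrow> bool" where
  "arc_enum n E arcs \<longleftrightarrow> distinct arcs \<and> set arcs = {(u, v). E u v}"

definition arc_reversal :: "(nat \<times> nat) list \<Rightarrow> complex mat" where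
  "arc_reversal arcs = mat (length arcs) (length arcs)
     (\<lambda>(i, j). if arcs ! j = (snd (arcs ! i), fst (arcs ! i)) then 1 else 0)"

end

theory Submission
  imports Defs
begin

lemma sylvester_det:
  fixes A B :: "'a :: idom mat"
  assumes A: "A \<in> carrier_mat N n" and B: "B \<in> carrier_mat n N"
  shows "det (1\<^sub>m N + A * B) = det (1\<^sub>m n + B * A)"
proof -
  have AB: "A * B \<in> carrier_mat N N" and BA: "B * A \<in> carrier_mat n n" using A B by auto
  define F1 where "F1 = four_block_mat (1\<^sub>m N) (0\<^sub>m N n) B (1\<^sub>m n)"
  define F2 where "F2 = four_block_mat (1\<^sub>m N) (-A) (0\<^sub>m n N) (1\<^sub>m n + B * A)"
  define G1 where "G1 = four_block_mat (1\<^sub>m N + A * B) (-A) (0\<^sub>m n N) (1\<^sub>m n)"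
  have cF1: "F1 \<in> carrier_mat (N+n) (N+n)" unfolding F1_def by auto
  have cF2: "F2 \<in> carrier_mat (N+n) (N+n)" unfolding F2_def using BA by auto
  have cG1: "G1 \<in> carrier_mat (N+n) (N+n)" unfolding G1_def using AB by auto
  have h1: "- (B*A) + (1\<^sub>m n + B*A) = 1\<^sub>m n" by (rule eq_matI) (insert A B, auto)
  have h2: "(1\<^sub>m N + A*B) + - A * B = 1\<^sub>m N" by (rule eq_matI) (insert A B AB, auto)
  have e1: "F1 * F2 = G1 * F1"
  proof -
    have "F1 * F2 = four_block_mat (1\<^sub>m N) (-A) B (1\<^sub>m n)"
      unfolding F1_def F2_def
      apply (subst mult_four_block_mat[OF one_carrier_mat zero_carrier_mat B one_carrier_mat one_carrier_mat uminus_carrier_mat[OF A] zero_carrier_mat add_carrier_mat[OF BA]])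
      using A B BA h1 by (simp)
    also have "\<dots> = G1 * F1"
      unfolding F1_def G1_def
      apply (subst mult_four_block_mat[OF add_carrier_mat[OF AB] uminus_carrier_mat[OF A] zero_carrier_mat one_carrier_mat one_carrier_mat zero_carrier_mat B one_carrier_mat])
      using A B AB h2 apply (simp)
      done
    finally show ?thesis .
  qed
  have d1: "det F1 = 1" unfolding F1_def
    by (subst det_four_block_mat_upper_right_zero[of _ N _ n], auto simp: B)
  have d2: "det F2 = det (1\<^sub>m n + B * A)" unfolding F2_def
    by (subst det_four_block_mat_lower_left_zero[of _ N _ n], insert A BA, auto)
  have d3: "det G1 = det (1\<^sub>m N + A * B)" unfolding G1_def
    by (subst det_four_block_mat_lower_left_zero[of _ N _ n], insert A AB, auto)
  have "det (F1 * F2) = det (G1 * F1)" using e1 by simp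
  then show ?thesis using det_mult[OF cF1 cF2] det_mult[OF cG1 cF1] d1 d2 d3 by simp
qed
lemma massoc: "A \<in> carrier_mat n n \<Longrightarrow> B \<in> carrier_mat n n \<Longrightarrow> C \<in> carrier_mat n n \<Longrightarrow> A * B * C = A * (B * C)"
  by (rule assoc_mult_mat)

lemma trace_comm:
  fixes A B :: "'a :: comm_ring_1 mat"
  assumes A: "A \<in> carrier_mat n k" and B: "B \<in> carrier_mat k n"
  shows "(\<Sum>i<n. (A*B)$$(i,i)) = (\<Sum>i<k. (B*A)$$(i,i))"
proof -
  have "(\<Sum>i<n. (A*B)$$(i,i)) = (\<Sum>i<n. \<Sum>j<k. A$$(i,j) * B$$(j,i))"
    using A B by (intro sum.cong refl) (auto simp: scalar_prod_def lessThan_atLeast0 intro!: sum.cong)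
  also have "\<dots> = (\<Sum>j<k. \<Sum>i<n. B$$(j,i) * A$$(i,j))"
    by (subst sum.swap) (simp add: mult.commute)
  also have "\<dots> = (\<Sum>i<k. (B*A)$$(i,i))"
    using A B by (intro sum.cong refl) (auto simp: scalar_prod_def lessThan_atLeast0 intro!: sum.cong)
  finally show ?thesis .
qed

lemma poly_char_poly_det:
  fixes A :: "'a :: field mat"
  assumes A: "A \<in> carrier_mat n n"
  shows "poly (char_poly A) x = det (x \<cdot>\<^sub>m 1\<^sub>m n - A)"
proof -
  have "- char_matrix A x = x \<cdot>\<^sub>m 1\<^sub>m n - A"
    using A by (intro eq_matI) (auto simp: char_matrix_def)
  then show ?thesis using char_poly_matrix[OF A] by simp
qed

lemma involution_det:
  fixes S :: "complex mat"
  assumes S: "S \<in> carrier_mat (2*m) (2*m)" and SS: "S * S = 1\<^sub>m (2*m)"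
    and tr: "(\<Sum>i<2*m. S$$(i,i)) = 0"
  shows "det (x \<cdot>\<^sub>m 1\<^sub>m (2*m) - \<beta> \<cdot>\<^sub>m S) = (x - \<beta>)^m * (x + \<beta>)^m"
proof -
  define N where "N = 2*m"
  have S': "S \<in> carrier_mat N N" using S N_def by simp
  obtain es where es: "char_poly S = (\<Prod>a\<leftarrow>es. [:- a, 1:])"
    using char_poly_factorized[OF S'] by blast
  obtain T where T: "T \<in> carrier_mat N N" and ut: "upper_triangular T" and sim: "similar_mat S T"
    using schur_decomposition_exists[OF S' es] by blast
  obtain N' P Q where PQ: "{S,T,P,Q} \<subseteq> carrier_mat N' N'" "P * Q = 1\<^sub>m N'" "Q * P = 1\<^sub>m N'" "S = P * T * Q"
    using similar_matD[OF sim] by blast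
  have "N' = N" using PQ(1) S' by auto
  then have P: "P \<in> carrier_mat N N" and Q: "Q \<in> carrier_mat N N" and PQ1: "P * Q = 1\<^sub>m N" and QP1: "Q * P = 1\<^sub>m N"
    using PQ by auto
  have QSP: "Q * S * P = T"
  proof -
    have "Q * S * P = Q * (P * T * Q) * P" using PQ by simp
    also have "\<dots> = (Q * P) * T * (Q * P)"
      using P Q T by (simp add: massoc)
    also have "\<dots> = T" using QP1 T by simp
    finally show ?thesis .
  qed
  have TT: "T * T = 1\<^sub>m N"
  proof -
    have "T * T = (Q * S * P) * (Q * S * P)" using QSP by simp
    also have "\<dots> = Q * (S * (P * Q) * S) * P"
      using P Q S' by (simp add: massoc)
    also have "\<dots> = 1\<^sub>m N" using PQ1 SS QP1 S' N_def Q by simp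
    finally show ?thesis .
  qed
  define t where "t i = T $$ (i,i)" for i
  have t2: "t i = 1 \<or> t i = -1" if i: "i < N" for i
  proof -
    have "(T*T)$$(i,i) = (\<Sum>k\<in>{0..<N}. T$$(i,k) * T$$(k,i))"
      using T i by (simp add: scalar_prod_def)
    also have "\<dots> = T$$(i,i) * T$$(i,i)"
    proof -
      have "(\<Sum>k\<in>{0..<N} - {i}. T$$(i,k) * T$$(k,i)) = 0"
      proof (rule sum.neutral, rule ballI)
        fix k assume k0: "k \<in> {0..<N} - {i}"
        then have k: "k < N" "k \<noteq> i" by auto
        show "T$$(i,k) * T$$(k,i) = 0"
        proof (cases "k < i")
          case True then show ?thesis using ut T i unfolding upper_triangular_def by auto
        next
          case False then have "i < k" using k by auto
          then show ?thesis using ut T k unfolding upper_triangular_def by auto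
        qed
      qed
      moreover have "(\<Sum>k\<in>{0..<N}. T$$(i,k) * T$$(k,i)) = T$$(i,i) * T$$(i,i) + (\<Sum>k\<in>{0..<N} - {i}. T$$(i,k) * T$$(k,i))"
        using i by (intro sum.remove) auto
      ultimately show ?thesis by simp
    qed
    finally have "(t i)^2 = 1" using TT i by (simp add: t_def power2_eq_square)
    then show ?thesis by (simp add: power2_eq_1_iff)
  qed
  have trT: "(\<Sum>i<N. t i) = 0"
  proof -
    have "(\<Sum>i<N. t i) = (\<Sum>i<N. ((Q * S) * P)$$(i,i))" using QSP by (simp add: t_def)
    also have "\<dots> = (\<Sum>i<N. (P * (Q * S))$$(i,i))"
      by (rule trace_comm) (use P Q S' in auto)
    also have "\<dots> = (\<Sum>i<N. S$$(i,i))" using P Q S' PQ1 by (simp add: massoc[symmetric])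
    finally show ?thesis using tr N_def by simp
  qed
  have "similar_mat (\<beta> \<cdot>\<^sub>m S) (\<beta> \<cdot>\<^sub>m T)"
    using sim unfolding similar_mat_def using similar_mat_wit_smult by blast
  then have cp: "char_poly (\<beta> \<cdot>\<^sub>m S) = char_poly (\<beta> \<cdot>\<^sub>m T)" by (rule char_poly_similar)
  have "det (x \<cdot>\<^sub>m 1\<^sub>m (2*m) - \<beta> \<cdot>\<^sub>m S) = poly (char_poly (\<beta> \<cdot>\<^sub>m T)) x"
    using poly_char_poly_det[of "\<beta> \<cdot>\<^sub>m S" N x] S' cp N_def by simp
  also have "char_poly (\<beta> \<cdot>\<^sub>m T) = (\<Prod>a\<leftarrow>diag_mat (\<beta> \<cdot>\<^sub>m T). [:- a, 1:])"
    by (rule char_poly_upper_triangular[of _ N]) (use T ut in \<open>auto simp: upper_triangular_def\<close>)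
  also have "poly \<dots> x = (\<Prod>i\<in>{0..<N}. x - \<beta> * t i)"
    using T by (simp add: poly_prod_list diag_mat_def o_def t_def prod.distinct_set_conv_list[symmetric] poly_prod)
  also have "\<dots> = (x - \<beta>)^m * (x + \<beta>)^m"
  proof -
    define I1 where "I1 = {i\<in>{0..<N}. t i = 1}"
    define I2 where "I2 = {i\<in>{0..<N}. t i = -1}"
    have un: "{0..<N} = I1 \<union> I2" and dis: "I1 \<inter> I2 = {}" using t2 by (auto simp: I1_def I2_def) (metis t2)
    have f: "finite I1" "finite I2" by (auto simp: I1_def I2_def)
    have "(\<Sum>i\<in>{0..<N}. t i) = (\<Sum>i\<in>I1. t i) + (\<Sum>i\<in>I2. t i)"
      by (simp add: un sum.union_disjoint[OF f dis])
    also have "\<dots> = of_nat (card I1) - of_nat (card I2)" by (simp add: I1_def I2_def)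
    finally have "of_nat (card I1) = (of_nat (card I2) :: complex)" using trT by (simp add: lessThan_atLeast0)
    then have c12: "card I1 = card I2" using of_nat_eq_iff by blast
    have "card I1 + card I2 = N" using card_Un_disjoint[OF f dis] un by (metis card_atLeastLessThan diff_zero)
    then have c: "card I1 = m" "card I2 = m" using c12 N_def by auto
    have "(\<Prod>i\<in>{0..<N}. x - \<beta> * t i) = (\<Prod>i\<in>I1. x - \<beta> * t i) * (\<Prod>i\<in>I2. x - \<beta> * t i)"
      by (simp add: un prod.union_disjoint[OF f dis])
    also have "\<dots> = (x - \<beta>)^m * (x + \<beta>)^m" using c by (simp add: I1_def I2_def)
    finally show ?thesis .
  qed
  finally show ?thesis .
qed
lemma point_det:
  fixes S d D :: "complex mat" and a b c x :: complex
  assumes S: "S \<in> carrier_mat (2*m) (2*m)" and SS: "S * S = 1\<^sub>m (2*m)"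
    and tr: "(\<Sum>i<2*m. S$$(i,i)) = 0"
    and d: "d \<in> carrier_mat n (2*m)" and D: "D \<in> carrier_mat (2*m) n"
    and dD: "d * D = 1\<^sub>m n" and nm: "n \<le> m" and k0: "x^2 - b^2 \<noteq> 0" and c: "c = a - b"
  shows "det (x \<cdot>\<^sub>m 1\<^sub>m (2*m) - S * (a \<cdot>\<^sub>m (D * d) + b \<cdot>\<^sub>m (1\<^sub>m (2*m) - D * d)))
     = (x^2 - b^2)^(m-n) * det ((x^2 - a*b) \<cdot>\<^sub>m 1\<^sub>m n - (c*x) \<cdot>\<^sub>m (d * S * D))"
proof -
  define N where "N = 2*m"
  define k where "k = x^2 - b^2"
  define K where "K = D * d"
  define M where "M = d * S * D"
  define X where "X = x \<cdot>\<^sub>m 1\<^sub>m N - b \<cdot>\<^sub>m S"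
  define Y where "Y = x \<cdot>\<^sub>m 1\<^sub>m N + b \<cdot>\<^sub>m S"
  define A' where "A' = c \<cdot>\<^sub>m ((x \<cdot>\<^sub>m S + b \<cdot>\<^sub>m 1\<^sub>m N) * D)"
  have S: "S \<in> carrier_mat N N" and d: "d \<in> carrier_mat n N" and D: "D \<in> carrier_mat N n"
    and SS: "S * S = 1\<^sub>m N" using assms N_def by auto
  have K: "K \<in> carrier_mat N N" using d D K_def by auto
  have M: "M \<in> carrier_mat n n" using d D S M_def by auto
  have X: "X \<in> carrier_mat N N" and Y: "Y \<in> carrier_mat N N" using S X_def Y_def by auto
  have SK: "S * K \<in> carrier_mat N N" using S K by auto
  have xSb: "x \<cdot>\<^sub>m S + b \<cdot>\<^sub>m 1\<^sub>m N \<in> carrier_mat N N" using S by auto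
  have A': "A' \<in> carrier_mat N n" using xSb D A'_def by auto
  have s1: "a \<cdot>\<^sub>m K + b \<cdot>\<^sub>m (1\<^sub>m N - K) = b \<cdot>\<^sub>m 1\<^sub>m N + c \<cdot>\<^sub>m K"
    using K c by (intro eq_matI) (auto simp: algebra_simps)
  have s2: "S * (b \<cdot>\<^sub>m 1\<^sub>m N + c \<cdot>\<^sub>m K) = b \<cdot>\<^sub>m S + c \<cdot>\<^sub>m (S * K)"
    using S K by (simp add: mult_add_distrib_mat[of S N N _ N] mult_smult_distrib[of S N N _ N])
  have s3: "x \<cdot>\<^sub>m 1\<^sub>m N - (b \<cdot>\<^sub>m S + c \<cdot>\<^sub>m (S * K)) = X - c \<cdot>\<^sub>m (S * K)"
    using S SK unfolding X_def by (intro eq_matI) auto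
  have SX: "S * X = x \<cdot>\<^sub>m S - b \<cdot>\<^sub>m 1\<^sub>m N"
    using S SS unfolding X_def
    by (simp add: mult_minus_distrib_mat[of S N N _ N] mult_smult_distrib[of S N N _ N])
  have s4: "Y * X = k \<cdot>\<^sub>m 1\<^sub>m N"
  proof -
    have "Y * X = x \<cdot>\<^sub>m X + b \<cdot>\<^sub>m (S * X)"
      using S X unfolding Y_def
      by (simp add: add_mult_distrib_mat[of _ N N _ _ N] mult_smult_assoc_mat[of _ N N _ N])
    also have "\<dots> = k \<cdot>\<^sub>m 1\<^sub>m N" unfolding SX unfolding X_def k_def
      using S by (intro eq_matI) (auto simp: algebra_simps power2_eq_square)
    finally show ?thesis .
  qed
  have s5: "Y * S = x \<cdot>\<^sub>m S + b \<cdot>\<^sub>m 1\<^sub>m N"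
    using S SS unfolding Y_def
    by (simp add: add_mult_distrib_mat[of _ N N _ _ N] mult_smult_assoc_mat[of _ N N _ N])
  have s6: "Y * (X - c \<cdot>\<^sub>m (S * K)) = k \<cdot>\<^sub>m 1\<^sub>m N - A' * d"
  proof -
    have "Y * (X - c \<cdot>\<^sub>m (S * K)) = Y * X - c \<cdot>\<^sub>m (Y * (S * K))"
      using Y X SK by (simp add: mult_minus_distrib_mat[of Y N N _ N] mult_smult_distrib[of Y N N _ N])
    also have "Y * (S * K) = (x \<cdot>\<^sub>m S + b \<cdot>\<^sub>m 1\<^sub>m N) * D * d"
      using Y S D d unfolding K_def s5[symmetric]
      by (simp add: assoc_mult_mat[of _ N N _ N _ n] assoc_mult_mat[of _ N N _ n _ N])
    also have "c \<cdot>\<^sub>m ((x \<cdot>\<^sub>m S + b \<cdot>\<^sub>m 1\<^sub>m N) * D * d) = A' * d"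
      unfolding A'_def by (rule sym, rule mult_smult_assoc_mat) (use xSb D d in auto)
    finally show ?thesis using s4 by simp
  qed
  have s7: "d * A' = c \<cdot>\<^sub>m (x \<cdot>\<^sub>m M + b \<cdot>\<^sub>m 1\<^sub>m n)"
  proof -
    have "d * A' = c \<cdot>\<^sub>m (d * ((x \<cdot>\<^sub>m S + b \<cdot>\<^sub>m 1\<^sub>m N) * D))"
      unfolding A'_def by (rule mult_smult_distrib) (use d D xSb in auto)
    also have "d * ((x \<cdot>\<^sub>m S + b \<cdot>\<^sub>m 1\<^sub>m N) * D) = d * (x \<cdot>\<^sub>m S + b \<cdot>\<^sub>m 1\<^sub>m N) * D"
      by (rule assoc_mult_mat[symmetric]) (use d D xSb in auto)
    also have "d * (x \<cdot>\<^sub>m S + b \<cdot>\<^sub>m 1\<^sub>m N) = x \<cdot>\<^sub>m (d * S) + b \<cdot>\<^sub>m d"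
      using d S by (simp add: mult_add_distrib_mat[of d n N _ N] mult_smult_distrib[of d n N _ N])
    also have "(x \<cdot>\<^sub>m (d * S) + b \<cdot>\<^sub>m d) * D = x \<cdot>\<^sub>m M + b \<cdot>\<^sub>m 1\<^sub>m n"
      using d S D dD unfolding M_def
      by (simp add: add_mult_distrib_mat[of _ n N _ _ n] mult_smult_assoc_mat[of _ n N _ n])
    finally show ?thesis .
  qed
  have e1: "k \<cdot>\<^sub>m 1\<^sub>m N - A' * d = k \<cdot>\<^sub>m (1\<^sub>m N + (- (1/k)) \<cdot>\<^sub>m A' * d)"
  proof -
    have "(- (1/k)) \<cdot>\<^sub>m A' * d = (- (1/k)) \<cdot>\<^sub>m (A' * d)"
      using A' d by (simp add: mult_smult_assoc_mat[of _ N n _ N])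
    then show ?thesis using A' d k0 unfolding k_def by (intro eq_matI) (auto simp: field_simps)
  qed
  have e2: "1\<^sub>m n + d * ((- (1/k)) \<cdot>\<^sub>m A') = (1/k) \<cdot>\<^sub>m ((x^2 - a*b) \<cdot>\<^sub>m 1\<^sub>m n - (c*x) \<cdot>\<^sub>m M)"
  proof -
    have "d * ((- (1/k)) \<cdot>\<^sub>m A') = (- (1/k)) \<cdot>\<^sub>m (c \<cdot>\<^sub>m (x \<cdot>\<^sub>m M + b \<cdot>\<^sub>m 1\<^sub>m n))"
      using A' d s7 by (simp add: mult_smult_distrib[of d n N _ n])
    then show ?thesis using M k0 c unfolding k_def by (intro eq_matI) (auto simp: field_simps power2_eq_square)
  qed
  have "det Y * det (x \<cdot>\<^sub>m 1\<^sub>m N - S * (a \<cdot>\<^sub>m K + b \<cdot>\<^sub>m (1\<^sub>m N - K)))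
      = det (Y * (X - c \<cdot>\<^sub>m (S * K)))"
    unfolding s1 s2 s3 using Y X SK by (subst det_mult[of _ N]) (auto intro: minus_carrier_mat)
  also have "\<dots> = k^N * det (1\<^sub>m N + (- (1/k)) \<cdot>\<^sub>m A' * d)"
    unfolding s6 e1 using A' d by simp
  also have "det (1\<^sub>m N + (- (1/k)) \<cdot>\<^sub>m A' * d) = det (1\<^sub>m n + d * ((- (1/k)) \<cdot>\<^sub>m A'))"
    by (rule sylvester_det) (use A' d in auto)
  also have "\<dots> = (1/k)^n * det ((x^2 - a*b) \<cdot>\<^sub>m 1\<^sub>m n - (c*x) \<cdot>\<^sub>m M)"
    unfolding e2 using M by simp
  finally have main: "det Y * det (x \<cdot>\<^sub>m 1\<^sub>m N - S * (a \<cdot>\<^sub>m K + b \<cdot>\<^sub>m (1\<^sub>m N - K)))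
      = k^N * (1/k)^n * det ((x^2 - a*b) \<cdot>\<^sub>m 1\<^sub>m n - (c*x) \<cdot>\<^sub>m M)" by simp
  have "Y = x \<cdot>\<^sub>m 1\<^sub>m (2*m) - (-b) \<cdot>\<^sub>m S" unfolding Y_def N_def using S N_def by (intro eq_matI) auto
  then have dY: "det Y = k^m" using involution_det[OF assms(1) assms(2) tr, of x "-b"]
    by (simp add: k_def power_mult_distrib[symmetric] algebra_simps power2_eq_square)
  have kk: "k^N * (1/k)^n = k^m * k^(m-n)"
    using k0 nm unfolding N_def k_def
    by (simp add: power_diff power_add[symmetric] power_one_over field_simps mult_2_right)
  from main have "k^m * det (x \<cdot>\<^sub>m 1\<^sub>m N - S * (a \<cdot>\<^sub>m K + b \<cdot>\<^sub>m (1\<^sub>m N - K)))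
      = k^m * (k^(m-n) * det ((x^2 - a*b) \<cdot>\<^sub>m 1\<^sub>m n - (c*x) \<cdot>\<^sub>m M))"
    unfolding dY kk by simp
  then show ?thesis using k0 unfolding k_def K_def M_def N_def by simp
qed
lemma arcs_length:
  assumes G: "simple_graph n E" and A: "arc_enum n E arcs"
  shows "length arcs = 2 * num_edges E"
proof -
  define Ar where "Ar = {(u, v). E u v}"
  define f where "f = (\<lambda>(u::nat, v::nat). {u, v})"
  have fin: "finite Ar"
    by (rule finite_subset[of _ "{..<n} \<times> {..<n}"]) (use G in \<open>auto simp: Ar_def simple_graph_def\<close>)
  have B: "{{u, v} | u v. E u v} = f ` Ar" by (auto simp: f_def Ar_def)
  have fib: "card {a \<in> Ar. f a = e} = 2" if e: "e \<in> f ` Ar" for e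
  proof -
    obtain u v where uv: "E u v" "e = {u, v}" using e by (auto simp: f_def Ar_def)
    have "{a \<in> Ar. f a = e} = {(u, v), (v, u)}"
      using uv G by (auto simp: f_def Ar_def simple_graph_def doubleton_eq_iff)
    moreover have "u \<noteq> v" using uv G by (auto simp: simple_graph_def)
    ultimately show ?thesis by simp
  qed
  have "length arcs = card Ar" using A distinct_card[of arcs] by (auto simp: arc_enum_def Ar_def)
  also have "\<dots> = (\<Sum>a\<in>Ar. 1)" by simp
  also have "\<dots> = (\<Sum>e\<in>f ` Ar. \<Sum>a\<in>{a \<in> Ar. f a = e}. 1)" by (rule sum.image_gen[OF fin])
  also have "\<dots> = (\<Sum>e\<in>f ` Ar. 2)" using fib by (intro sum.cong) auto
  also have "\<dots> = 2 * num_edges E" unfolding num_edges_def B by simp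
  finally show ?thesis .
qed

lemma arc_reversal_props:
  assumes G: "simple_graph n E" and A: "arc_enum n E arcs"
  defines "L \<equiv> length arcs"
  shows "arc_reversal arcs \<in> carrier_mat L L"
    and "arc_reversal arcs * arc_reversal arcs = 1\<^sub>m L"
    and "(\<Sum>i<L. arc_reversal arcs $$ (i,i)) = 0"
proof -
  let ?S = "arc_reversal arcs"
  show cS: "?S \<in> carrier_mat L L" by (simp add: arc_reversal_def L_def)
  have dist: "distinct arcs" and set: "set arcs = {(u, v). E u v}" using A by (auto simp: arc_enum_def)
  have ex: "\<exists>k<L. arcs ! k = prod.swap (arcs ! i)" if i: "i < L" for i
  proof -
    have "arcs ! i \<in> set arcs" using i L_def by simp
    then have mem: "arcs ! i \<in> {(u, v). E u v}" by (simp only: set)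
    obtain u v where uv: "arcs ! i = (u, v)" "E u v" using mem by (cases "arcs ! i") auto
    then have "E v u" using G by (auto simp: simple_graph_def)
    then have "prod.swap (arcs ! i) \<in> set arcs" using set uv by simp
    then show ?thesis by (auto simp: in_set_conv_nth L_def)
  qed
  define r where "r i = (SOME k. k < L \<and> arcs ! k = prod.swap (arcs ! i))" for i
  have r: "r i < L" "arcs ! (r i) = prod.swap (arcs ! i)" if "i < L" for i
    using someI_ex[OF ex[OF that]] unfolding r_def by auto
  have Sent: "?S $$ (i, k) = (if k = r i then 1 else 0)" if "i < L" "k < L" for i k
  proof -
    have "(arcs ! k = prod.swap (arcs ! i)) = (k = r i)"
      using r[OF that(1)] that dist nth_eq_iff_index_eq[OF dist, of k "r i"] L_def by auto
    then show ?thesis using that by (simp add: arc_reversal_def L_def prod.swap_def)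
  qed
  show "?S * ?S = 1\<^sub>m L"
  proof (rule eq_matI)
    fix i j assume ij: "i < dim_row (1\<^sub>m L)" "j < dim_col (1\<^sub>m L)"
    then have i: "i < L" and j: "j < L" by auto
    have "(?S * ?S) $$ (i, j) = (\<Sum>k\<in>{0..<L}. ?S $$ (i,k) * ?S $$ (k,j))"
      using cS i j by (simp add: scalar_prod_def)
    also have "\<dots> = (\<Sum>k\<in>{0..<L}. if k = r i then ?S $$ (k,j) else 0)"
      using i by (intro sum.cong) (auto simp: Sent)
    also have "\<dots> = ?S $$ (r i, j)" using r[OF i] by simp
    also have "\<dots> = (if j = i then 1 else 0)"
    proof -
      have "r (r i) = i"
      proof -
        have "arcs ! (r (r i)) = arcs ! i" using r[OF i] r[OF r(1)[OF i]] by simp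
        then show ?thesis using nth_eq_iff_index_eq[OF dist] r(1)[OF r(1)[OF i]] i L_def by auto
      qed
      then show ?thesis using Sent[OF r(1)[OF i] j] by auto
    qed
    finally show "(?S * ?S) $$ (i, j) = 1\<^sub>m L $$ (i, j)" using i j by simp
  next
    show "dim_row (?S * ?S) = dim_row (1\<^sub>m L)" "dim_col (?S * ?S) = dim_col (1\<^sub>m L)" using cS by auto
  qed
  have "?S $$ (i,i) = 0" if i: "i < L" for i
  proof -
    have "arcs ! i \<in> set arcs" using i L_def by simp
    then have mem: "arcs ! i \<in> {(u, v). E u v}" by (simp only: set)
    obtain u v where uv: "arcs ! i = (u, v)" "E u v" using mem by (cases "arcs ! i") auto
    then have "fst (arcs ! i) \<noteq> snd (arcs ! i)" using G by (auto simp: simple_graph_def)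
    then have "arcs ! i \<noteq> (snd (arcs ! i), fst (arcs ! i))" by (cases "arcs ! i") auto
    then show ?thesis using i by (simp add: arc_reversal_def L_def)
  qed
  then show "(\<Sum>i<L. ?S $$ (i,i)) = 0" by simp
qed

lemma prod_list_scale:
  fixes s :: complex
  shows "s ^ length xs * prod_list (map f xs) = prod_list (map (\<lambda>y. s * f y) xs)"
  by (induct xs) (auto simp: algebra_simps)

lemma scaled_char_det:
  fixes M :: "complex mat"
  assumes M: "M \<in> carrier_mat n n" and cp: "char_poly M = prod_list (map (\<lambda>\<mu>. [:- \<mu>, 1:]) \<mu>s)"
  shows "det (z \<cdot>\<^sub>m 1\<^sub>m n - s \<cdot>\<^sub>m M) = prod_list (map (\<lambda>\<mu>. z - s * \<mu>) \<mu>s)"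
proof -
  have len: "length \<mu>s = n"
    using degree_monic_char_poly[OF M] degree_linear_factors[of uminus \<mu>s] cp by simp
  show ?thesis
  proof (cases "s = 0")
    case True
    have "z \<cdot>\<^sub>m 1\<^sub>m n - s \<cdot>\<^sub>m M = z \<cdot>\<^sub>m 1\<^sub>m n" using True M by (intro eq_matI) auto
    moreover have "prod_list (map (\<lambda>\<mu>. z) \<mu>s) = z ^ length \<mu>s" by (induct \<mu>s) auto
    ultimately show ?thesis using True len by simp
  next
    case False
    have "z \<cdot>\<^sub>m 1\<^sub>m n - s \<cdot>\<^sub>m M = s \<cdot>\<^sub>m ((z/s) \<cdot>\<^sub>m 1\<^sub>m n - M)"
      using False M by (intro eq_matI) (auto simp: field_simps)
    then have "det (z \<cdot>\<^sub>m 1\<^sub>m n - s \<cdot>\<^sub>m M) = s^n * poly (char_poly M) (z/s)"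
      using M poly_char_poly_det[OF M, of "z/s"] by simp
    also have "\<dots> = s ^ length \<mu>s * prod_list (map (\<lambda>\<mu>. z/s - \<mu>) \<mu>s)"
      unfolding cp len[symmetric] by (simp add: poly_prod_list o_def)
    also have "\<dots> = prod_list (map (\<lambda>\<mu>. z - s * \<mu>) \<mu>s)"
      unfolding prod_list_scale using False by (intro arg_cong[where f=prod_list] list.map_cong0) (simp add: field_simps)
    finally show ?thesis .
  qed
qed

lemma quad_factor:
  fixes c \<mu> a b x :: complex
  shows "(x - (c * \<mu> + csqrt (c\<^sup>2 * \<mu>\<^sup>2 + 4 * a * b)) / 2) * (x - (c * \<mu> - csqrt (c\<^sup>2 * \<mu>\<^sup>2 + 4 * a * b)) / 2)
    = x^2 - a*b - c * x * \<mu>"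
proof -
  define r where "r = csqrt (c\<^sup>2 * \<mu>\<^sup>2 + 4 * a * b)"
  have r2: "r^2 = c\<^sup>2 * \<mu>\<^sup>2 + 4 * a * b" unfolding r_def by simp
  have "(x - (c * \<mu> + r) / 2) * (x - (c * \<mu> - r) / 2) = x^2 - c*\<mu>*x + ((c*\<mu>)^2 - r^2)/4"
    by (simp add: field_simps power2_eq_square)
  also have "\<dots> = x^2 - a*b - c * x * \<mu>" unfolding r2 by (simp add: field_simps power2_eq_square)
  finally show ?thesis unfolding r_def .
qed

lemma quad_poly:
  fixes c \<mu> a b x :: complex
  shows "poly ([:- ((c * \<mu> + csqrt (c\<^sup>2 * \<mu>\<^sup>2 + 4 * a * b)) / 2), 1:]
                                 * [:- ((c * \<mu> - csqrt (c\<^sup>2 * \<mu>\<^sup>2 + 4 * a * b)) / 2), 1:]) x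
    = x^2 - a*b - c * x * \<mu>"
  using quad_factor[of x c \<mu> a b] by (simp add: algebra_simps)

lemma poly_eq_cofinite:
  fixes p q :: "complex poly"
  assumes F: "finite F" and eq: "\<And>x. x \<notin> F \<Longrightarrow> poly p x = poly q x"
  shows "p = q"
proof (rule ccontr)
  assume "p \<noteq> q"
  then have "p - q \<noteq> 0" by simp
  then have "finite {x. poly (p - q) x = 0}" by (rule poly_roots_finite)
  moreover have "- F \<subseteq> {x. poly (p - q) x = 0}" using eq by auto
  ultimately have "finite (- F)" using finite_subset by blast
  with F have "finite (UNIV :: complex set)" by (metis Compl_partition2 finite_Un)
  then show False using infinite_UNIV_char_0 by blast
qed

theorem corollary3:
  fixes n :: nat and E :: "nat \<Rightarrow> nat \<Rightarrow> bool" and arcs :: "(nat \<times> nat) list"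
    and a b c :: complex and d :: "complex mat" and \<mu>s :: "complex list"
  assumes "simple_graph n E" and "graph_connected n E"
    and "arc_enum n E arcs"
    and "num_edges E \<ge> n"
    and "c = a - b"
    and "d \<in> carrier_mat n (2 * num_edges E)"
    and "d * mat_adjoint d = 1\<^sub>m n"
    and "char_poly (d * arc_reversal arcs * mat_adjoint d)
           = prod_list (map (\<lambda>\<mu>. [:- \<mu>, 1:]) \<mu>s)"
  shows "let m = num_edges E;
             C = a \<cdot>\<^sub>m (mat_adjoint d * d) + b \<cdot>\<^sub>m (1\<^sub>m (2 * m) - mat_adjoint d * d);
             U = arc_reversal arcs * C
         in char_poly U =
              prod_list (map (\<lambda>\<mu>. [:- ((c * \<mu> + csqrt (c\<^sup>2 * \<mu>\<^sup>2 + 4 * a * b)) / 2), 1:]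
                                 * [:- ((c * \<mu> - csqrt (c\<^sup>2 * \<mu>\<^sup>2 + 4 * a * b)) / 2), 1:]) \<mu>s)
              * [:- b, 1:] ^ (m - n) * [:b, 1:] ^ (m - n)"
proof -
  define m where "m = num_edges E"
  define S where "S = arc_reversal arcs"
  define D where "D = mat_adjoint d"
  define M where "M = d * S * D"
  have len: "length arcs = 2 * m" using arcs_length[OF assms(1,3)] m_def by simp
  have S: "S \<in> carrier_mat (2*m) (2*m)" and SS: "S * S = 1\<^sub>m (2*m)" and tr: "(\<Sum>i<2*m. S$$(i,i)) = 0"
    using arc_reversal_props[OF assms(1,3)] len unfolding S_def by auto
  have d: "d \<in> carrier_mat n (2*m)" using assms(6) m_def by simp
  have D: "D \<in> carrier_mat (2*m) n" using d unfolding D_def mat_adjoint_def by (auto simp: mat_of_rows_def)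
  have dD: "d * D = 1\<^sub>m n" using assms(7) D_def by simp
  have nm: "n \<le> m" using assms(4) m_def by simp
  have M: "M \<in> carrier_mat n n" using d S D M_def by auto
  have cp: "char_poly M = prod_list (map (\<lambda>\<mu>. [:- \<mu>, 1:]) \<mu>s)" using assms(8) S_def D_def M_def by simp
  define U where "U = S * (a \<cdot>\<^sub>m (D * d) + b \<cdot>\<^sub>m (1\<^sub>m (2 * m) - D * d))"
  have U: "U \<in> carrier_mat (2*m) (2*m)" using S D d U_def by auto
  define R where "R = prod_list (map (\<lambda>\<mu>. [:- ((c * \<mu> + csqrt (c\<^sup>2 * \<mu>\<^sup>2 + 4 * a * b)) / 2), 1:]
                                 * [:- ((c * \<mu> - csqrt (c\<^sup>2 * \<mu>\<^sup>2 + 4 * a * b)) / 2), 1:]) \<mu>s)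
              * [:- b, 1:] ^ (m - n) * [:b, 1:] ^ (m - n)"
  have "char_poly U = R"
  proof (rule poly_eq_cofinite[of "{b, -b}"])
    fix x assume x: "x \<notin> {b, -b}"
    have k0: "x^2 - b^2 \<noteq> 0"
    proof
      assume "x^2 - b^2 = 0"
      then have "(x - b) * (x + b) = 0" by (simp add: algebra_simps power2_eq_square)
      then show False using x by (auto simp: add_eq_0_iff)
    qed
    have "poly (char_poly U) x = det (x \<cdot>\<^sub>m 1\<^sub>m (2*m) - U)" by (rule poly_char_poly_det[OF U])
    also have "\<dots> = (x^2 - b^2)^(m-n) * det ((x^2 - a*b) \<cdot>\<^sub>m 1\<^sub>m n - (c*x) \<cdot>\<^sub>m M)"
      unfolding U_def M_def by (rule point_det[OF S SS tr d D dD nm k0 assms(5)])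
    also have "det ((x^2 - a*b) \<cdot>\<^sub>m 1\<^sub>m n - (c*x) \<cdot>\<^sub>m M) = prod_list (map (\<lambda>\<mu>. x^2 - a*b - c * x * \<mu>) \<mu>s)"
      by (rule scaled_char_det[OF M cp])
    also have "(x^2 - b^2)^(m-n) * prod_list (map (\<lambda>\<mu>. x^2 - a*b - c * x * \<mu>) \<mu>s) = poly R x"
    proof -
      have "poly R x = prod_list (map (\<lambda>\<mu>. x^2 - a*b - c * x * \<mu>) \<mu>s) * ((x - b)^(m-n) * (x + b)^(m-n))"
        unfolding R_def poly_mult unfolding poly_prod_list map_map o_def quad_poly poly_power by (simp add: algebra_simps)
      also have "(x - b)^(m-n) * (x + b)^(m-n) = (x^2 - b^2)^(m-n)"
        by (simp add: power_mult_distrib[symmetric] algebra_simps power2_eq_square)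
      finally show ?thesis by simp
    qed
    finally show "poly (char_poly U) x = poly R x" .
  qed simp
  then show ?thesis unfolding Let_def m_def[symmetric] S_def[symmetric] D_def[symmetric] U_def[symmetric] R_def .
qed

end
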